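(* Let $G$ be an arbitrary graph and let $H$ be an odd cycle. Then $AT(G+_S H)=3$.
   Context: For an orientation $D$, a subdigraph is Eulerian if every vertex has equal in- and outdegree in it; $D$ is an AT-orientation if the numbers of Eulerian subgraphs with an even and with an odd number of arcs differ; $AT(G)$ is the smallest $k$ such that $G$ has an AT-orientation of maximum outdegree at most $k-1$. $S(G)$ is obtained from $G$ by subdividing each edge once, with vertex set identified with $V(G)\cup E(G)$. $G+_S H$ has vertex set $(V(G)\cup E(G))\times V(H)$, with $(u_1,u_2)\sim(v_1,v_2)$ iff [$u_1=v_1\in V(G)$ and $u_2v_2\in E(H)$] or [$u_2=v_2$ and $u_1v_1\in E(S(G))$]. *)

theory Defs
  imports Main
begin

definition graph :: "'a set \<Rightarrow> 'a set set \<Rightarrow> bool" where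
  "graph V E \<longleftrightarrow> finite V \<and> (\<forall>e\<in>E. \<exists>u v. e = {u, v} \<and> u \<in> V \<and> v \<in> V \<and> u \<noteq> v)"

definition odd_cycle :: "'b set \<Rightarrow> 'b set set \<Rightarrow> bool" where
  "odd_cycle V E \<longleftrightarrow> (\<exists>(n::nat) f. n \<ge> 3 \<and> odd n \<and> bij_betw f {0..<n} V \<and>
      E = {{f i, f ((i + 1) mod n)} | i. i < n})"

definition is_orientation :: "'a set set \<Rightarrow> ('a \<times> 'a) set \<Rightarrow> bool" where
  "is_orientation E D \<longleftrightarrow> (\<forall>(u, v)\<in>D. {u, v} \<in> E) \<and>
      (\<forall>u v. {u, v} \<in> E \<longrightarrow> ((u, v) \<in> D \<longleftrightarrow> (v, u) \<notin> D))"

definition outdeg :: "('a \<times> 'a) set \<Rightarrow> 'a \<Rightarrow> nat" where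
  "outdeg A v = card {w. (v, w) \<in> A}"

definition indeg :: "('a \<times> 'a) set \<Rightarrow> 'a \<Rightarrow> nat" where
  "indeg A v = card {w. (w, v) \<in> A}"

definition eulerian_subgraphs :: "('a \<times> 'a) set \<Rightarrow> ('a \<times> 'a) set set" where
  "eulerian_subgraphs D = {A. A \<subseteq> D \<and> (\<forall>v. indeg A v = outdeg A v)}"

definition AT_orientation :: "('a \<times> 'a) set \<Rightarrow> bool" where
  "AT_orientation D \<longleftrightarrow>
     card {A \<in> eulerian_subgraphs D. even (card A)} \<noteq> card {A \<in> eulerian_subgraphs D. odd (card A)}"

definition AT :: "'a set \<Rightarrow> 'a set set \<Rightarrow> nat" where
  "AT V E = (LEAST k. \<exists>D. is_orientation E D \<and> AT_orientation D \<and> (\<forall>v\<in>V. outdeg D v + 1 \<le> k))"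

definition subdiv_V :: "'a set \<Rightarrow> 'a set set \<Rightarrow> ('a + 'a set) set" where
  "subdiv_V V E = Inl ` V \<union> Inr ` E"

definition subdiv_E :: "'a set set \<Rightarrow> ('a + 'a set) set set" where
  "subdiv_E E = {{Inl u, Inr e} | u e. e \<in> E \<and> u \<in> e}"

definition sprod_V :: "'a set \<Rightarrow> 'a set set \<Rightarrow> 'b set \<Rightarrow> (('a + 'a set) \<times> 'b) set" where
  "sprod_V V E VH = subdiv_V V E \<times> VH"

definition sprod_E :: "'a set \<Rightarrow> 'a set set \<Rightarrow> 'b set \<Rightarrow> 'b set set \<Rightarrow> (('a + 'a set) \<times> 'b) set set" where
  "sprod_E V E VH EH =
     {{(u1, u2), (v1, v2)} | u1 u2 v1 v2.
        u1 \<in> subdiv_V V E \<and> v1 \<in> subdiv_V V E \<and> u2 \<in> VH \<and> v2 \<in> VH \<and>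
        ((u1 = v1 \<and> u1 \<in> Inl ` V \<and> {u2, v2} \<in> EH) \<or>
         (u2 = v2 \<and> {u1, v1} \<in> subdiv_E E))}"

end

theory Submission
  imports Defs
begin

lemma sprod_E_D:
  assumes "{a,b} \<in> sprod_E V E VH EH"
  shows "a \<in> sprod_V V E VH \<and> b \<in> sprod_V V E VH \<and>
    ((fst a = fst b \<and> fst a \<in> Inl ` V \<and> {snd a, snd b} \<in> EH) \<or>
     (snd a = snd b \<and> {fst a, fst b} \<in> subdiv_E E))"
proof -
  obtain u1 u2 v1 v2 where eq: "{a,b} = {(u1, u2), (v1, v2)}" and
    c: "u1 \<in> subdiv_V V E \<and> v1 \<in> subdiv_V V E \<and> u2 \<in> VH \<and> v2 \<in> VH \<and>
        ((u1 = v1 \<and> u1 \<in> Inl ` V \<and> {u2, v2} \<in> EH) \<or>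
         (u2 = v2 \<and> {u1, v1} \<in> subdiv_E E))"
    using assms unfolding sprod_E_def by blast
  from eq have "(a = (u1,u2) \<and> b = (v1,v2)) \<or> (a = (v1,v2) \<and> b = (u1,u2))"
    by (simp add: doubleton_eq_iff)
  then show ?thesis using c unfolding sprod_V_def by (auto simp: insert_commute)
qed

lemma sprod_E_I:
  assumes "v \<in> V" "{h, h'} \<in> EH" "h \<in> VH" "h' \<in> VH"
  shows "{(Inl v, h), (Inl v, h')} \<in> sprod_E V E VH EH"
  using assms unfolding sprod_E_def subdiv_V_def by blast

lemma mod_pred_iff:
  fixes i j n :: nat
  assumes "i < n" "j < n"
  shows "(Suc j mod n = i) = (j = (i + n - 1) mod n)"
proof (cases "Suc j < n")
  case True
  then show ?thesis using assms
    by (cases i) (auto simp: mod_if)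
next
  case False
  then have "j = n - 1" using assms by auto
  then show ?thesis using assms
    by (cases i) (auto simp: mod_if)
qed


lemma fin_in: "finite A \<Longrightarrow> finite {w. (w,y) \<in> A}"
  by (rule finite_subset[of _ "fst ` A"]) force+
lemma fin_out: "finite A \<Longrightarrow> finite {w. (y,w) \<in> A}"
  by (rule finite_subset[of _ "snd ` A"]) force+

lemma deg_union:
  assumes "finite A" "finite C" "A \<inter> C = {}"
  shows "indeg (A \<union> C) y = indeg A y + indeg C y"
    "outdeg (A \<union> C) y = outdeg A y + outdeg C y"
proof -
  have "{w. (w,y) \<in> A \<union> C} = {w. (w,y) \<in> A} \<union> {w. (w,y) \<in> C}" by blast
  moreover have "{w. (w,y) \<in> A} \<inter> {w. (w,y) \<in> C} = {}" using assms by blast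
  ultimately show "indeg (A \<union> C) y = indeg A y + indeg C y"
    unfolding indeg_def using fin_in[OF assms(1)] fin_in[OF assms(2)] by (metis card_Un_disjoint)
  have "{w. (y,w) \<in> A \<union> C} = {w. (y,w) \<in> A} \<union> {w. (y,w) \<in> C}" by blast
  moreover have "{w. (y,w) \<in> A} \<inter> {w. (y,w) \<in> C} = {}" using assms by blast
  ultimately show "outdeg (A \<union> C) y = outdeg A y + outdeg C y"
    unfolding outdeg_def using fin_out[OF assms(1)] fin_out[OF assms(2)] by (metis card_Un_disjoint)
qed

lemma eul_union:
  assumes "finite A" "finite C" "A \<inter> C = {}" "\<forall>v. indeg A v = outdeg A v" "\<forall>v. indeg C v = outdeg C v"
  shows "\<forall>v. indeg (A \<union> C) v = outdeg (A \<union> C) v"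
  using deg_union[OF assms(1-3)] assms(4,5) by simp

lemma eul_diff:
  assumes "finite A" "C \<subseteq> A" "\<forall>v. indeg A v = outdeg A v" "\<forall>v. indeg C v = outdeg C v"
  shows "\<forall>v. indeg (A - C) v = outdeg (A - C) v"
proof
  fix v
  have fC: "finite C" using assms finite_subset by blast
  have AU: "A = (A - C) \<union> C" using assms by blast
  have dj: "(A - C) \<inter> C = {}" by blast
  have fAC: "finite (A - C)" using assms by simp
  have "indeg A v = indeg (A - C) v + indeg C v" "outdeg A v = outdeg (A - C) v + outdeg C v"
    using deg_union[OF fAC fC dj, of v] AU by simp_all
  then show "indeg (A - C) v = outdeg (A - C) v" using assms by simp
qed

lemma card_le1_eq: "finite S \<Longrightarrow> card S \<le> 1 \<Longrightarrow> a \<in> S \<Longrightarrow> b \<in> S \<Longrightarrow> a = b"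
  using card_le_Suc0_iff_eq by fastforce

lemma odd_dicycle_not_AT:
  fixes p :: "nat \<Rightarrow> 'v" and D :: "('v \<times> 'v) set"
  assumes finD: "finite D" and on: "odd n" and n3: "n \<ge> 3" and inj: "inj_on p {0..<n}"
    and arcs: "\<forall>i<n. (p i, p (Suc i mod n)) \<in> D"
    and od: "\<forall>i<n. outdeg D (p i) \<le> 1"
  shows "\<not> AT_orientation D"
proof -
  define C where "C = (\<lambda>i. (p i, p (Suc i mod n))) ` {0..<n}"
  have CD: "C \<subseteq> D" using arcs unfolding C_def by auto
  have finC: "finite C" unfolding C_def by simp
  have "inj_on (\<lambda>i. (p i, p (Suc i mod n))) {0..<n}"
    using inj unfolding inj_on_def by auto
  then have cardC: "card C = n" unfolding C_def by (simp add: card_image)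
  have n0: "n > 0" using n3 by simp
  have Ceul: "\<forall>v. indeg C v = outdeg C v"
  proof
    fix y
    show "indeg C y = outdeg C y"
    proof (cases "y \<in> p ` {0..<n}")
      case True
      then obtain i where i: "i < n" "y = p i" by auto
      have o: "{w. (y,w) \<in> C} = {p (Suc i mod n)}"
        using i inj n0 unfolding C_def inj_on_def by auto
      have "{w. (w,y) \<in> C} = {p ((i + n - 1) mod n)}"
      proof -
        have "{w. (w,y) \<in> C} = p ` {j. j < n \<and> Suc j mod n = i}"
          using i inj n0 unfolding C_def inj_on_def by auto
        also have "{j. j < n \<and> Suc j mod n = i} = {(i + n - 1) mod n}"
          using mod_pred_iff[OF i(1)] n0 by auto
        finally show ?thesis by simp
      qed
      then show ?thesis using o unfolding indeg_def outdeg_def by simp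
    next
      case False
      then have "{w. (y,w) \<in> C} = {}" "{w. (w,y) \<in> C} = {}"
        unfolding C_def by auto
      then show ?thesis unfolding indeg_def outdeg_def by simp
    qed
  qed
  have dich: "C \<subseteq> A \<or> A \<inter> C = {}" if A: "A \<in> eulerian_subgraphs D" for A
  proof -
    have AD: "A \<subseteq> D" and Ae: "\<forall>v. indeg A v = outdeg A v"
      using A unfolding eulerian_subgraphs_def by auto
    have finA: "finite A" using AD finD finite_subset by blast
    define t where "t i = ((p i, p (Suc i mod n)) \<in> A)" for i
    have step: "t (Suc i mod n)" if "i < n" "t i" for i
    proof -
      define j where "j = Suc i mod n"
      have j: "j < n" using n0 unfolding j_def by simp
      have "p i \<in> {w. (w, p j) \<in> A}" using that unfolding t_def j_def by simp
      then have "indeg A (p j) \<noteq> 0" unfolding indeg_def using fin_in[OF finA] by auto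
      then have "outdeg A (p j) \<noteq> 0" using Ae by simp
      then obtain w where w: "(p j, w) \<in> A" unfolding outdeg_def
        by (metis (no_types, lifting) card.empty empty_Collect_eq)
      have "w = p (Suc j mod n)"
        apply (rule card_le1_eq[OF fin_out[OF finD, of "p j"]])
        using od j w AD arcs unfolding outdeg_def by auto
      then show ?thesis using w unfolding t_def j_def by simp
    qed
    have iter: "t ((i + k) mod n)" if "i < n" "t i" for i k
    proof (induction k)
      case 0
      then show ?case using that by simp
    next
      case (Suc k)
      have "t (Suc ((i + k) mod n) mod n)" using step[OF _ Suc] n0 by simp
      then show ?case by (simp add: mod_Suc_eq)
    qed
    show ?thesis
    proof (cases "\<exists>i<n. t i")
      case True
      then obtain i where i: "i < n" "t i" by auto
      have "t j" if "j < n" for j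
        using iter[OF i, of "n - i + j"] i that by simp
      then show ?thesis unfolding C_def t_def by auto
    next
      case False
      then show ?thesis unfolding C_def t_def by auto
    qed
  qed
  define g where "g A = (A - C) \<union> (C - A)" for A
  have gg: "g (g A) = A" for A unfolding g_def by blast
  have gmap: "g A \<in> eulerian_subgraphs D \<and> (odd (card (g A)) \<longleftrightarrow> even (card A))"
    if A: "A \<in> eulerian_subgraphs D" for A
  proof -
    have AD: "A \<subseteq> D" and Ae: "\<forall>v. indeg A v = outdeg A v"
      using A unfolding eulerian_subgraphs_def by auto
    have finA: "finite A" using AD finD finite_subset by blast
    from dich[OF A] show ?thesis
    proof
      assume CA: "C \<subseteq> A"
      have ge: "g A = A - C" using CA unfolding g_def by blast
      have "card A = card (A - C) + n"
        using CA finA cardC by (metis card_Diff_subset card_mono finC le_add_diff_inverse2)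
      moreover have "A - C \<in> eulerian_subgraphs D"
        using eul_diff[OF finA CA Ae Ceul] AD unfolding eulerian_subgraphs_def by auto
      ultimately show ?thesis using ge on by auto
    next
      assume AC: "A \<inter> C = {}"
      have ge: "g A = A \<union> C" using AC unfolding g_def by blast
      have "card (A \<union> C) = card A + n"
        using AC finA finC cardC by (simp add: card_Un_disjoint)
      moreover have "A \<union> C \<in> eulerian_subgraphs D"
        using eul_union[OF finA finC AC Ae Ceul] AD CD unfolding eulerian_subgraphs_def by auto
      ultimately show ?thesis using ge on by auto
    qed
  qed
  have "bij_betw g {A \<in> eulerian_subgraphs D. even (card A)} {A \<in> eulerian_subgraphs D. odd (card A)}"
    apply (rule bij_betw_byWitness[where f'=g])
    using gg gmap by auto
  then show ?thesis unfolding AT_orientation_def using bij_betw_same_card by blast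
qed


lemma arith1: "i < n \<Longrightarrow> (n::nat) \<ge> 3 \<Longrightarrow> Suc ((n - Suc i mod n) mod n) mod n = (n - i) mod n"
  by (cases "Suc i < n") (auto simp: mod_if)

lemma arith2: "i < n \<Longrightarrow> i' < n \<Longrightarrow> (n - i) mod n = (n - i') mod (n::nat) \<Longrightarrow> i = i'"
  by (auto simp: mod_if split: if_splits)

lemma arith3: "i < n \<Longrightarrow> (n::nat) \<ge> 3 \<Longrightarrow> Suc (Suc i mod n) mod n \<noteq> i"
  by (auto simp: mod_if)

lemma card_sub2: "S \<subseteq> {a, b} \<Longrightarrow> card S \<le> 2"
proof -
  assume "S \<subseteq> {a, b}"
  then have "card S \<le> card {a, b}" by (simp add: card_mono)
  also have "\<dots> \<le> 2" by (simp add: card_insert_if)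
  finally show ?thesis .
qed

theorem corollary3p2:
  fixes V :: "'a set" and E :: "'a set set" and VH :: "'b set" and EH :: "'b set set"
  assumes "graph V E" and "V \<noteq> {}" and "odd_cycle VH EH"
  shows "AT (sprod_V V E VH) (sprod_E V E VH EH) = 3"
proof -
  obtain n :: nat and f where n3: "n \<ge> 3" and on: "odd n" and bij: "bij_betw f {0..<n} VH"
    and EH: "EH = {{f i, f ((i + 1) mod n)} | i. i < n}"
    using assms(3) unfolding odd_cycle_def by blast
  have n0: "n > 0" using n3 by simp
  have injf: "inj_on f {0..<n}" and fimg: "f ` {0..<n} = VH" using bij unfolding bij_betw_def by auto
  have fin: "f i \<in> VH" if "i < n" for i using fimg that by auto
  have finV: "finite V" using assms(1) unfolding graph_def by simp
  have EV: "E \<subseteq> Pow V" using assms(1) unfolding graph_def by fastforce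
  have finE: "finite E" using finV EV finite_subset by blast
  have finVH: "finite VH" unfolding fimg[symmetric] by simp
  let ?SV = "sprod_V V E VH" and ?SE = "sprod_E V E VH EH"
  have finSV: "finite ?SV" unfolding sprod_V_def subdiv_V_def using finV finE finVH by simp
  have edge: "{(Inl v, f i), (Inl v, f (Suc i mod n))} \<in> ?SE" if "v \<in> V" "i < n" for v i
    apply (rule sprod_E_I)
    using that fin n0 unfolding EH by auto
  have finD: "finite D" if "is_orientation ?SE D" for D
  proof -
    have "D \<subseteq> ?SV \<times> ?SV"
    proof
      fix p assume "p \<in> D"
      obtain u w where p0: "p = (u, w)" by (cases p)
      have p: "p = (u, w)" "{u, w} \<in> ?SE" using that \<open>p \<in> D\<close> p0 unfolding is_orientation_def by auto
      then show "p \<in> ?SV \<times> ?SV" using sprod_E_D[OF p(2)] by simp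
    qed
    then show ?thesis using finSV finite_subset by blast
  qed
  have lower: "3 \<le> k" if Dor: "is_orientation ?SE D" and DAT: "AT_orientation D"
    and Dk: "\<forall>x\<in>?SV. outdeg D x + 1 \<le> k" for D k
  proof (rule ccontr)
    assume "\<not> 3 \<le> k"
    then have od: "outdeg D x \<le> 1" if "x \<in> ?SV" for x using Dk that by fastforce
    have fD: "finite D" using finD[OF Dor] .
    obtain v where v: "v \<in> V" using assms(2) by blast
    define x :: "nat \<Rightarrow> (('a + 'a set) \<times> 'b)" where "x i = (Inl v, f i)" for i
    have xSV: "x i \<in> ?SV" if "i < n" for i
      unfolding x_def sprod_V_def subdiv_V_def using v fin[OF that] by auto
    define s where "s i = ((x i, x (Suc i mod n)) \<in> D)" for i
    have o2: "((u, w) \<in> D) = ((w, u) \<notin> D)" if "{u, w} \<in> ?SE" for u w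
      using Dor[unfolded is_orientation_def, THEN conjunct2] that by blast
    have ns: "(x (Suc i mod n), x i) \<in> D" if "i < n" "\<not> s i" for i
      using o2[OF edge[OF v that(1)]] that(2) unfolding s_def x_def by simp
    have bck: "s i" if "i < n" "s (Suc i mod n)" for i
    proof (rule ccontr)
      assume "\<not> s i"
      define j where "j = Suc i mod n"
      have j: "j < n" using n0 unfolding j_def by simp
      have a1: "(x j, x i) \<in> D" using ns[OF that(1) \<open>\<not> s i\<close>] unfolding j_def .
      have a2: "(x j, x (Suc j mod n)) \<in> D" using that(2) unfolding s_def j_def .
      have "x i = x (Suc j mod n)"
        apply (rule card_le1_eq[OF fin_out[OF fD, of "x j"]])
        using od[OF xSV[OF j]] a1 a2 unfolding outdeg_def by auto
      then have "f i = f (Suc j mod n)" unfolding x_def by simp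
      then have "i = Suc j mod n" using injf that(1) n0
        by (intro inj_onD[OF injf]) auto
      then show False using arith3[OF that(1) n3] unfolding j_def by simp
    qed
    have iter: "s ((i + k) mod n) \<longrightarrow> s i" if "i < n" for i k
    proof (induction k)
      case 0 then show ?case using that by simp
    next
      case (Suc k)
      have "s (Suc ((i + k) mod n) mod n) \<Longrightarrow> s ((i + k) mod n)" using bck[of "(i + k) mod n"] n0 by simp
      then show ?case using Suc by (simp add: mod_Suc_eq)
    qed
    have injx: "inj_on x {0..<n}" using injf unfolding x_def inj_on_def by auto
    show False
    proof (cases "s 0")
      case True
      have "s i" if "i < n" for i using iter[OF that, of "n - i"] that True by simp
      then have "\<not> AT_orientation D"
        using odd_dicycle_not_AT[OF fD on n3 injx] od xSV unfolding s_def by auto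
      then show False using DAT by simp
    next
      case False
      have nsi: "\<not> s i" if "i < n" for i using iter[of 0 i] that False n0 by simp
      define p where "p i = x ((n - i) mod n)" for i
      have injp: "inj_on p {0..<n}"
        unfolding inj_on_def p_def
      proof (intro ballI impI)
        fix i i' assume "i \<in> {0..<n}" "i' \<in> {0..<n}" "x ((n - i) mod n) = x ((n - i') mod n)"
        then show "i = i'" using injx n0 arith2[of i n i'] by (simp add: inj_on_def)
      qed
      have arcs: "\<forall>i<n. (p i, p (Suc i mod n)) \<in> D"
      proof (intro allI impI)
        fix i assume i: "i < n"
        define j where "j = (n - Suc i mod n) mod n"
        have j: "j < n" using n0 unfolding j_def by simp
        have "(x (Suc j mod n), x j) \<in> D" using ns[OF j nsi[OF j]] .
        then show "(p i, p (Suc i mod n)) \<in> D"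
          unfolding p_def j_def using arith1[OF i n3] by simp
      qed
      have "\<forall>i<n. outdeg D (p i) \<le> 1" using od xSV n0 unfolding p_def by simp
      then have "\<not> AT_orientation D"
        using odd_dicycle_not_AT[OF fD on n3 injp arcs] by simp
      then show False using DAT by simp
    qed
  qed
  define g where "g = the_inv_into {0..<n} f"
  have gf: "g (f i) = i" if "i < n" for i
    unfolding g_def using the_inv_into_f_f[OF injf] that by simp
  have fg: "f (g h) = h" "g h < n" if "h \<in> VH" for h
    unfolding g_def using f_the_inv_into_f_bij_betw[OF bij that] the_inv_into_into[OF injf, of h "{0..<n}"]
      that fimg by auto
  define r :: "('a + 'a set) \<times> 'b \<Rightarrow> nat" where "r a = (case a of (Inl _, h) \<Rightarrow> g h + 1 | (Inr _, _) \<Rightarrow> 0)" for a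
  define D where "D = {(a, b). {a, b} \<in> ?SE \<and> r a < r b}"
  have rne: "r a \<noteq> r b" if "{a, b} \<in> ?SE" for a b
  proof -
    note c = sprod_E_D[OF that]
    show ?thesis
    proof (cases "fst a = fst b \<and> fst a \<in> Inl ` V \<and> {snd a, snd b} \<in> EH")
      case True
      then obtain i where i: "i < n" "{snd a, snd b} = {f i, f (Suc i mod n)}" unfolding EH by auto
      have nei: "Suc i mod n \<noteq> i" using i(1) n3 by (auto simp: mod_if)
      have "f i \<noteq> f (Suc i mod n)"
      proof
        assume "f i = f (Suc i mod n)"
        then have "i = Suc i mod n" by (rule inj_onD[OF injf]) (use i(1) n0 in auto)
        then show False using nei by simp
      qed
      then have "snd a \<noteq> snd b" using i(2) by (auto simp: doubleton_eq_iff)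
      moreover have "snd a \<in> VH" "snd b \<in> VH" using c unfolding sprod_V_def by auto
      ultimately have "g (snd a) \<noteq> g (snd b)" using fg by metis
      then show ?thesis using True unfolding r_def by (auto split: prod.splits)
    next
      case False
      then have "{fst a, fst b} \<in> subdiv_E E" using c by blast
      then obtain u e where "{fst a, fst b} = {Inl u, Inr e}" unfolding subdiv_E_def by blast
      then show ?thesis unfolding r_def by (auto simp: doubleton_eq_iff split: prod.splits)
    qed
  qed
  have Dor: "is_orientation ?SE D"
    unfolding is_orientation_def D_def
  proof (intro conjI allI impI)
    show "\<forall>(u, v)\<in>{(a, b). {a, b} \<in> ?SE \<and> r a < r b}. {u, v} \<in> ?SE" by auto
  next
    fix u v assume uv: "{u, v} \<in> ?SE"
    then have "{v, u} \<in> ?SE" by (simp add: insert_commute)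
    then show "((u, v) \<in> {(a, b). {a, b} \<in> ?SE \<and> r a < r b}) =
      ((v, u) \<notin> {(a, b). {a, b} \<in> ?SE \<and> r a < r b})"
      using rne[OF uv] uv by auto
  qed
  have fD: "finite D" using finD[OF Dor] .
  have acyc: "A = {}" if "A \<in> eulerian_subgraphs D" for A
  proof (rule ccontr)
    assume ne: "A \<noteq> {}"
    have AD: "A \<subseteq> D" and Ae: "\<forall>v. indeg A v = outdeg A v"
      using that unfolding eulerian_subgraphs_def by auto
    have finA: "finite A" using AD fD finite_subset by blast
    define m where "m = Max ((\<lambda>e. r (snd e)) ` A)"
    have "m \<in> (\<lambda>e. r (snd e)) ` A" unfolding m_def using finA ne by (intro Max_in) auto
    then obtain ab0 where "ab0 \<in> A" "r (snd ab0) = m" by auto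
    then obtain a b where ab: "(a, b) \<in> A" "r b = m" by (cases ab0) auto
    have "a \<in> {w. (w, b) \<in> A}" using ab by simp
    then have "indeg A b \<noteq> 0" unfolding indeg_def using fin_in[OF finA, of b] card_0_eq by blast
    then have "outdeg A b \<noteq> 0" using Ae by simp
    then obtain c where c: "(b, c) \<in> A" unfolding outdeg_def
      by (metis (no_types, lifting) card.empty empty_Collect_eq)
    have "r b < r c" using c AD unfolding D_def by auto
    moreover have "r c \<le> m" unfolding m_def using c finA by (force intro: Max_ge)
    ultimately show False using ab by simp
  qed
  have eu: "eulerian_subgraphs D = {{}}"
    using acyc unfolding eulerian_subgraphs_def indeg_def outdeg_def by auto
  have h1: "{A \<in> eulerian_subgraphs D. even (card A)} = {{}}"
  proof (rule set_eqI)
    fix X show "X \<in> {A \<in> eulerian_subgraphs D. even (card A)} \<longleftrightarrow> X \<in> {{}}"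
      unfolding eu by (cases "X = {}") simp_all
  qed
  have h2: "{A \<in> eulerian_subgraphs D. odd (card A)} = {}"
  proof (rule set_eqI)
    fix X show "X \<in> {A \<in> eulerian_subgraphs D. odd (card A)} \<longleftrightarrow> X \<in> {}"
      unfolding eu by (cases "X = {}") simp_all
  qed
  have DAT: "AT_orientation D" unfolding AT_orientation_def h1 h2 by simp
  have Dout: "outdeg D x + 1 \<le> 3" if x: "x \<in> ?SV" for x
  proof -
    obtain a h where xa: "x = (a, h)" and a: "a \<in> subdiv_V V E" and h: "h \<in> VH"
      using x unfolding sprod_V_def by auto
    have "card {w. (x, w) \<in> D} \<le> 2"
    proof (cases a)
      case (Inr e)
      have e: "e \<in> E" using a Inr unfolding subdiv_V_def by auto
      obtain u1 u2 where e2: "e = {u1, u2}" using assms(1) e unfolding graph_def by blast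
      have "{w. (x, w) \<in> D} \<subseteq> {(Inl u1, h), (Inl u2, h)}"
      proof
        fix w assume "w \<in> {w. (x, w) \<in> D}"
        then have "{x, w} \<in> ?SE" unfolding D_def by simp
        note c = sprod_E_D[OF this]
        have "\<not> (fst x \<in> Inl ` V)" using xa Inr by auto
        then have "snd w = h" "{Inr e, fst w} \<in> subdiv_E E" using c xa Inr by auto
        then obtain u e' where "{Inr e, fst w} = {Inl u, Inr e'}" "u \<in> e'" unfolding subdiv_E_def by blast
        then have "fst w = Inl u" "u \<in> e" by (auto simp: doubleton_eq_iff)
        then show "w \<in> {(Inl u1, h), (Inl u2, h)}" using \<open>snd w = h\<close> e2
          by (cases w) auto
      qed
      then show ?thesis by (rule card_sub2)
    next
      case (Inl v)
      obtain i where i: "i < n" "h = f i" using h fimg by auto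
      have "{w. (x, w) \<in> D} \<subseteq> {(Inl v, f (Suc i mod n)), (Inl v, f ((i + n - 1) mod n))}"
      proof
        fix w assume "w \<in> {w. (x, w) \<in> D}"
        then have xw: "{x, w} \<in> ?SE" "r x < r w" unfolding D_def by auto
        note c = sprod_E_D[OF xw(1)]
        show "w \<in> {(Inl v, f (Suc i mod n)), (Inl v, f ((i + n - 1) mod n))}"
        proof (cases "fst x = fst w \<and> fst x \<in> Inl ` V \<and> {snd x, snd w} \<in> EH")
          case True
          then have fw: "fst w = Inl v" using xa Inl by simp
          have "snd w \<noteq> h" using xw(2) fw xa Inl unfolding r_def by (cases w) auto
          obtain k where k: "k < n" "{h, snd w} = {f k, f (Suc k mod n)}"
            using True xa unfolding EH by auto
          have kn: "Suc k mod n < n" using n0 by simp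
          have "snd w = f (Suc i mod n) \<or> snd w = f ((i + n - 1) mod n)"
          proof (cases "h = f k")
            case True
            then have "i = k" using i k injf by (simp add: inj_on_def)
            then show ?thesis using k \<open>snd w \<noteq> h\<close> True by (auto simp: doubleton_eq_iff)
          next
            case False
            then have "h = f (Suc k mod n)" "snd w = f k" using k by (auto simp: doubleton_eq_iff)
            then have "i = Suc k mod n" using i kn injf by (simp add: inj_on_def)
            then have "k = (i + n - 1) mod n" using mod_pred_iff[OF i(1) k(1)] by simp
            then show ?thesis using \<open>snd w = f k\<close> by simp
          qed
          then show ?thesis using fw by (cases w) auto
        next
          case False
          then have "{fst x, fst w} \<in> subdiv_E E" using c by blast
          then obtain u e where "{fst x, fst w} = {Inl u, Inr e}" unfolding subdiv_E_def by blast
          then have "r w = 0" using xa Inl unfolding r_def by (cases w) (auto simp: doubleton_eq_iff)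
          then show ?thesis using xw(2) by simp
        qed
      qed
      then show ?thesis by (rule card_sub2)
    qed
    then show ?thesis unfolding outdeg_def by simp
  qed
  show ?thesis unfolding AT_def
  proof (rule Least_equality)
    show "\<exists>D. is_orientation ?SE D \<and> AT_orientation D \<and> (\<forall>v\<in>?SV. outdeg D v + 1 \<le> 3)"
      using Dor DAT Dout by blast
  next
    fix k assume "\<exists>D. is_orientation ?SE D \<and> AT_orientation D \<and> (\<forall>v\<in>?SV. outdeg D v + 1 \<le> k)"
    then show "3 \<le> k" using lower by blast
  qed
qed

end
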